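(* Let $q=(q_1,\ldots,q_n)$ be a sequence of positive integers, set $Q:=1+q_1+\cdots+q_n$, and define \[ T_q:=\{\,b\in\{1,\ldots,Q-1\} \;:\; Q\nmid q_i b \text{ for all } i\in\{1,\ldots,n\}\,\}. \] Then the local $h^\ast$-polynomial of the $n$-simplex $\Delta_{(1,q)}$ is \[ \ell^\ast(\Delta_{(1,q)};z)=\sum_{b\in T_q} z^{\omega(b)},\qquad \text{where}\quad \omega(b)=b-\sum_{i=1}^n\left\lfloor \frac{q_i b}{Q}\right\rfloor . \]
   Context: Let $e^{(1)},\ldots,e^{(n)}$ be the standard basis of $\mathbb{R}^n$. For a vector $q=(q_1,\ldots,q_n)$ of positive integers, $\Delta_{(1,q)}:=\operatorname{conv}\bigl(e^{(1)},\ldots,e^{(n)},-\sum_{i=1}^n q_ie^{(i)}\bigr)\subset\mathbb{R}^n$; it is a lattice $n$-simplex. For a lattice $d$-simplex $\Delta=\operatorname{conv}(v^{(0)},\ldots,v^{(d)})\subset\mathbb{R}^n$, its open parallelepiped is $\Pi^\circ_\Delta:=\{\sum_{i=0}^d\lambda_i(v^{(i)},1)\in\mathbb{R}^{n+1} : 0<\lambda_i<1 \text{ for all } i\}$, and its local $h^\ast$-polynomial (box polynomial) is $\ell^\ast(\Delta;z):=\sum_{x=(x_1,\ldots,x_{n+1})\in\Pi^\circ_\Delta\cap\mathbb{Z}^{n+1}} z^{x_{n+1}}$. *)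

theory Defs
  imports Complex_Main "HOL-Computational_Algebra.Polynomial"
begin

text \<open>Points of R^n and Z^n are modelled as functions nat => real / nat => int,
  coordinates 0..n-1 (coordinate i-1 is the i-th standard coordinate).
  A lattice simplex is given by its list of vertices (lattice points of Z^n).\<close>

definition open_parallelepiped :: "nat \<Rightarrow> (nat \<Rightarrow> int) list \<Rightarrow> (nat \<Rightarrow> real) set" where
  "open_parallelepiped n vs =
     {x. \<exists>lam :: nat \<Rightarrow> real.
           (\<forall>i<length vs. 0 < lam i \<and> lam i < 1) \<and>
           (\<forall>j<n. x j = (\<Sum>i<length vs. lam i * real_of_int ((vs ! i) j))) \<and>
           x n = (\<Sum>i<length vs. lam i) \<and>
           (\<forall>j>n. x j = 0)}"

definition box_lattice_points :: "nat \<Rightarrow> (nat \<Rightarrow> int) list \<Rightarrow> (nat \<Rightarrow> int) set" where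
  "box_lattice_points n vs = {x. (\<lambda>j. real_of_int (x j)) \<in> open_parallelepiped n vs}"

definition local_hstar :: "nat \<Rightarrow> (nat \<Rightarrow> int) list \<Rightarrow> int poly" where
  "local_hstar n vs = (\<Sum>x\<in>box_lattice_points n vs. monom 1 (nat (x n)))"

definition delta_1q_vertices :: "nat list \<Rightarrow> (nat \<Rightarrow> int) list" where
  "delta_1q_vertices q =
     map (\<lambda>i. (\<lambda>j. if j = i then 1 else 0)) [0..<length q] @
     [(\<lambda>j. if j < length q then - int (q ! j) else 0)]"

definition Qsum :: "nat list \<Rightarrow> nat" where
  "Qsum q = 1 + sum_list q"

definition T_set :: "nat list \<Rightarrow> nat set" where
  "T_set q = {b \<in> {1..Qsum q - 1}. \<forall>i<length q. \<not> Qsum q dvd q ! i * b}"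

definition omega :: "nat list \<Rightarrow> nat \<Rightarrow> int" where
  "omega q b = int b - (\<Sum>i<length q. \<lfloor>real (q ! i * b) / real (Qsum q)\<rfloor>)"

end

theory Submission
  imports Defs
begin

lemma vs_len: "length (delta_1q_vertices q) = length q + 1"
  by (simp add: delta_1q_vertices_def)

lemma vs_nth_lt: "i < length q \<Longrightarrow> delta_1q_vertices q ! i = (\<lambda>j. if j = i then 1 else 0)"
  by (simp add: delta_1q_vertices_def nth_append)

lemma vs_nth_last: "delta_1q_vertices q ! length q = (\<lambda>j. if j < length q then - int (q ! j) else 0)"
  by (simp add: delta_1q_vertices_def nth_append)

lemma coord:
  assumes "j < length q"
  shows "(\<Sum>i<length q + 1. lam i * real_of_int ((delta_1q_vertices q ! i) j))
         = lam j - lam (length q) * real (q ! j)"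
proof -
  have "(\<Sum>i<length q. lam i * real_of_int ((delta_1q_vertices q ! i) j))
        = (\<Sum>i<length q. if i = j then lam i else 0)"
    by (rule sum.cong) (auto simp: vs_nth_lt)
  also have "\<dots> = lam j" using assms by simp
  finally show ?thesis using assms by (simp add: vs_nth_last)
qed

lemma sumq: "real (Qsum q) = 1 + (\<Sum>i<length q. real (q ! i))"
  by (simp add: Qsum_def sum_list_sum_nth atLeast0LessThan)

definition fpt :: "nat list \<Rightarrow> nat \<Rightarrow> nat \<Rightarrow> int" where
  "fpt q b = (\<lambda>j. if j < length q then - \<lfloor>real (q ! j * b) / real (Qsum q)\<rfloor>
                 else if j = length q then omega q b else 0)"

lemma Qpos: "real (Qsum q) > 0" by (simp add: Qsum_def)

lemma dirA:
  assumes b: "b \<in> T_set q"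
  shows "fpt q b \<in> box_lattice_points (length q) (delta_1q_vertices q)"
proof -
  define n where "n = length q"
  define Q where "Q = real (Qsum q)"
  have Q0: "Q > 0" using Qpos Q_def by simp
  have b1: "1 \<le> b" and bQ: "b \<le> Qsum q - 1" and nd: "\<And>i. i < n \<Longrightarrow> \<not> Qsum q dvd q ! i * b"
    using b by (auto simp: T_set_def n_def)
  have bQ': "real b < Q" using bQ b1 unfolding Q_def by (simp add: Qsum_def)
  define y where "y i = real (q ! i * b) / Q" for i
  define lam where "lam i = (if i < n then y i - real_of_int \<lfloor>y i\<rfloor> else real b / Q)" for i
  have yni: "y i \<notin> \<int>" if "i < n" for i
  proof
    assume "y i \<in> \<int>"
    then obtain m where m: "y i = real_of_int m" by (auto elim: Ints_cases)
    hence "real (q ! i * b) = Q * real_of_int m" using Q0 unfolding y_def by (simp add: field_simps)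
    hence "int (q ! i * b) = int (Qsum q) * m" unfolding Q_def
      by (metis of_int_eq_iff of_int_mult of_int_of_nat_eq)
    hence "int (Qsum q) dvd int (q ! i * b)" by simp
    hence "Qsum q dvd q ! i * b" by (metis int_dvd_int_iff of_nat_mult)
    with nd that show False by simp
  qed
  have L: "\<forall>i<n+1. 0 < lam i \<and> lam i < 1"
  proof (intro allI impI)
    fix i assume "i < n + 1"
    show "0 < lam i \<and> lam i < 1"
    proof (cases "i < n")
      case True
      have "real_of_int \<lfloor>y i\<rfloor> \<noteq> y i" using yni[OF True] by (metis Ints_of_int)
      moreover have "real_of_int \<lfloor>y i\<rfloor> \<le> y i" "y i < real_of_int \<lfloor>y i\<rfloor> + 1" by linarith+
      ultimately have "real_of_int \<lfloor>y i\<rfloor> < y i" "y i - real_of_int \<lfloor>y i\<rfloor> < 1" by linarith+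
      then show ?thesis using True unfolding lam_def by auto
    next
      case False
      then show ?thesis using b1 bQ' Q0 unfolding lam_def by (auto simp: field_simps)
    qed
  qed
  have C: "\<forall>j<n. real_of_int (fpt q b j) =
      (\<Sum>i<length (delta_1q_vertices q). lam i * real_of_int ((delta_1q_vertices q ! i) j))"
  proof (intro allI impI)
    fix j assume j: "j < n"
    have "y j = real (q ! j) * (real b / Q)" unfolding y_def by simp
    then show "real_of_int (fpt q b j) =
      (\<Sum>i<length (delta_1q_vertices q). lam i * real_of_int ((delta_1q_vertices q ! i) j))"
      using j unfolding vs_len coord[OF j[unfolded n_def]]
      by (simp add: fpt_def lam_def n_def y_def Q_def)
  qed
  have sy: "(\<Sum>i<n. y i) = real b * (Q - 1) / Q"
  proof -
    have "(\<Sum>i<n. y i) = (\<Sum>i<n. real (q ! i)) * real b / Q"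
      unfolding y_def by (simp add: sum_divide_distrib sum_distrib_right)
    also have "(\<Sum>i<n. real (q ! i)) = Q - 1" using sumq[of q] unfolding Q_def n_def by simp
    finally show ?thesis by simp
  qed
  have N: "real_of_int (fpt q b n) = (\<Sum>i<length (delta_1q_vertices q). lam i)"
  proof -
    have "(\<Sum>i<length (delta_1q_vertices q). lam i) = (\<Sum>i<n. lam i) + lam n"
      by (simp add: vs_len n_def)
    also have "(\<Sum>i<n. lam i) = (\<Sum>i<n. y i) - (\<Sum>i<n. real_of_int \<lfloor>y i\<rfloor>)"
      by (simp add: lam_def sum_subtractf)
    finally have e: "(\<Sum>i<length (delta_1q_vertices q). lam i) =
        real b * (Q - 1) / Q - (\<Sum>i<n. real_of_int \<lfloor>y i\<rfloor>) + real b / Q"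
      using sy by (simp add: lam_def)
    have "real b * (Q - 1) / Q + real b / Q = real b" using Q0 by (simp add: field_simps)
    moreover have "real_of_int (fpt q b n) = real b - (\<Sum>i<n. real_of_int \<lfloor>y i\<rfloor>)"
      by (simp add: fpt_def n_def omega_def y_def Q_def)
    ultimately show ?thesis using e by linarith
  qed
  show ?thesis
    unfolding box_lattice_points_def open_parallelepiped_def mem_Collect_eq
    apply (rule exI[of _ lam])
    using L C N by (auto simp: vs_len n_def fpt_def)
qed


lemma dirB:
  assumes x: "x \<in> box_lattice_points (length q) (delta_1q_vertices q)"
  shows "\<exists>b\<in>T_set q. x = fpt q b"
proof -
  define n where "n = length q"
  define Q where "Q = real (Qsum q)"
  have Q0: "Q > 0" using Qpos Q_def by simp
  obtain lam where L: "\<forall>i<n+1. 0 < lam i \<and> lam i < 1"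
    and C: "\<forall>j<n. real_of_int (x j) =
      (\<Sum>i<length (delta_1q_vertices q). lam i * real_of_int ((delta_1q_vertices q ! i) j))"
    and N: "real_of_int (x n) = (\<Sum>i<length (delta_1q_vertices q). lam i)"
    and Z: "\<forall>j>n. real_of_int (x j) = 0"
    using x unfolding box_lattice_points_def open_parallelepiped_def mem_Collect_eq vs_len n_def
    by auto
  define t where "t = lam n"
  have lamj: "lam j = real_of_int (x j) + t * real (q ! j)" if "j < n" for j
    using C that coord[of j q lam] unfolding vs_len n_def t_def by auto
  have "real_of_int (x n) = (\<Sum>i<n. lam i) + t"
    using N by (simp add: vs_len n_def t_def)
  also have "(\<Sum>i<n. lam i) = (\<Sum>i<n. real_of_int (x i)) + t * (\<Sum>i<n. real (q ! i))"
    by (simp add: lamj sum.distrib sum_distrib_left)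
  also have "(\<Sum>i<n. real (q ! i)) = Q - 1" using sumq[of q] unfolding Q_def n_def by simp
  finally have xn: "real_of_int (x n) = (\<Sum>i<n. real_of_int (x i)) + t * Q"
    by (simp add: algebra_simps)
  define k where "k = x n - (\<Sum>i<n. x i)"
  have kt: "real_of_int k = t * Q" unfolding k_def using xn by simp
  have t01: "0 < t" "t < 1" using L unfolding t_def by auto
  have "real_of_int k > 0" using kt t01 Q0 by simp
  hence k0: "k > 0" by simp
  have "real_of_int k < Q" using kt t01 Q0 by simp
  hence kQ: "k < int (Qsum q)" unfolding Q_def by linarith
  define b where "b = nat k"
  have bk: "int b = k" using k0 b_def by simp
  have tb: "t = real b / Q" using kt bk Q0 by (simp add: field_simps)
  have fl: "\<lfloor>real (q ! j * b) / Q\<rfloor> = - x j" if j: "j < n" for j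
  proof -
    have "real (q ! j * b) / Q = lam j - real_of_int (x j)"
      using lamj[OF j] tb by simp
    moreover have "0 < lam j" "lam j < 1" using L j by auto
    ultimately show ?thesis unfolding floor_eq_iff by simp
  qed
  have bT: "b \<in> T_set q"
    unfolding T_set_def
  proof (intro CollectI conjI allI impI)
    show "b \<in> {1..Qsum q - 1}" using k0 kQ bk by auto
  next
    fix i assume i: "i < length q"
    show "\<not> Qsum q dvd q ! i * b"
    proof
      assume "Qsum q dvd q ! i * b"
      then obtain m where m: "q ! i * b = Qsum q * m" by auto
      have "real (q ! i * b) / Q = real m" using m Q0 unfolding Q_def by simp
      hence "lam i = real_of_int (x i) + real m" using lamj[of i] i tb n_def by (simp add: mult.commute)
      moreover have "0 < lam i" "lam i < 1" using L i n_def by auto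
      ultimately have "real_of_int 0 < real_of_int (x i + int m)" "real_of_int (x i + int m) < real_of_int 1"
        by simp_all
      hence "0 < x i + int m" "x i + int m < 1" by (simp only: of_int_less_iff)+
      then show False by linarith
    qed
  qed
  have "x = fpt q b"
  proof
    fix j
    consider "j < n" | "j = n" | "j > n" by linarith
    then show "x j = fpt q b j"
    proof cases
      case 1 then show ?thesis using fl[OF 1] by (simp add: fpt_def n_def Q_def)
    next
      case 2
      have "omega q b = int b - (\<Sum>i<n. - x i)"
        unfolding omega_def n_def by (rule arg_cong[where f="\<lambda>s. int b - s"], rule sum.cong)
          (auto simp: fl[unfolded Q_def n_def, simplified])
      then show ?thesis using 2 bk k_def by (simp add: fpt_def n_def sum_negf)
    next
      case 3 then show ?thesis using Z by (simp add: fpt_def n_def)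
    qed
  qed
  then show ?thesis using bT by blast
qed

lemma fpt_inj: "inj_on (fpt q) (T_set q)"
proof (rule inj_onI)
  fix b c assume "fpt q b = fpt q c"
  moreover have "fpt q d (length q) - (\<Sum>j<length q. fpt q d j) = int d" for d
    by (simp add: fpt_def omega_def sum_negf)
  ultimately show "b = c" by (metis of_nat_eq_iff)
qed

theorem theorem2p1:
  fixes q :: "nat list"
  assumes "\<forall>i<length q. 0 < q ! i"
  shows "local_hstar (length q) (delta_1q_vertices q) =
         (\<Sum>b\<in>T_set q. monom 1 (nat (omega q b)))"
proof -
  have B: "box_lattice_points (length q) (delta_1q_vertices q) = fpt q ` T_set q"
    using dirA dirB by blast
  have "local_hstar (length q) (delta_1q_vertices q) = (\<Sum>x\<in>fpt q ` T_set q. monom 1 (nat (x (length q))))"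
    unfolding local_hstar_def B ..
  also have "\<dots> = (\<Sum>b\<in>T_set q. monom 1 (nat (fpt q b (length q))))"
    by (rule sum.reindex[OF fpt_inj, unfolded comp_def])
  also have "\<dots> = (\<Sum>b\<in>T_set q. monom 1 (nat (omega q b)))"
    by (simp add: fpt_def)
  finally show ?thesis .
qed

end
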